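(* If $G$ is a countably infinite ME-homogeneous graph, then its complement $\overline{G}$ is MH-homogeneous.
   Context: All graphs are undirected and loopless; subgraphs are induced. A monomorphism is an injective map sending adjacent vertices to adjacent vertices. $G$ is ME-homogeneous if every monomorphism between finite induced subgraphs of $G$ is the restriction of a surjective endomorphism of $G$; $G$ is MH-homogeneous if every monomorphism between finite induced subgraphs of $G$ is the restriction of an endomorphism of $G$. *)

theory Defs
  imports Main "HOL-Library.Countable_Set"
begin

definition graph :: "'a set \<Rightarrow> ('a \<Rightarrow> 'a \<Rightarrow> bool) \<Rightarrow> bool" where
  "graph V E \<longleftrightarrow> (\<forall>x y. E x y \<longrightarrow> x \<in> V \<and> y \<in> V) \<and>
                  (\<forall>x y. E x y \<longrightarrow> E y x) \<and> (\<forall>x. \<not> E x x)"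

definition compl_graph :: "'a set \<Rightarrow> ('a \<Rightarrow> 'a \<Rightarrow> bool) \<Rightarrow> 'a \<Rightarrow> 'a \<Rightarrow> bool" where
  "compl_graph V E x y \<longleftrightarrow> x \<in> V \<and> y \<in> V \<and> x \<noteq> y \<and> \<not> E x y"

definition mono_between :: "('a \<Rightarrow> 'a \<Rightarrow> bool) \<Rightarrow> 'a set \<Rightarrow> 'a set \<Rightarrow> ('a \<Rightarrow> 'a) \<Rightarrow> bool" where
  "mono_between E A B f \<longleftrightarrow> (\<forall>x\<in>A. f x \<in> B) \<and> inj_on f A \<and>
     (\<forall>x\<in>A. \<forall>y\<in>A. E x y \<longrightarrow> E (f x) (f y))"

definition endo :: "'a set \<Rightarrow> ('a \<Rightarrow> 'a \<Rightarrow> bool) \<Rightarrow> ('a \<Rightarrow> 'a) \<Rightarrow> bool" where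
  "endo V E h \<longleftrightarrow> (\<forall>x\<in>V. h x \<in> V) \<and> (\<forall>x\<in>V. \<forall>y\<in>V. E x y \<longrightarrow> E (h x) (h y))"

definition ME_homogeneous :: "'a set \<Rightarrow> ('a \<Rightarrow> 'a \<Rightarrow> bool) \<Rightarrow> bool" where
  "ME_homogeneous V E \<longleftrightarrow>
     (\<forall>A B f. A \<subseteq> V \<and> B \<subseteq> V \<and> finite A \<and> finite B \<and> mono_between E A B f \<longrightarrow>
        (\<exists>h. endo V E h \<and> h ` V = V \<and> (\<forall>x\<in>A. h x = f x)))"

definition MH_homogeneous :: "'a set \<Rightarrow> ('a \<Rightarrow> 'a \<Rightarrow> bool) \<Rightarrow> bool" where
  "MH_homogeneous V E \<longleftrightarrow>
     (\<forall>A B f. A \<subseteq> V \<and> B \<subseteq> V \<and> finite A \<and> finite B \<and> mono_between E A B f \<longrightarrow>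
        (\<exists>h. endo V E h \<and> (\<forall>x\<in>A. h x = f x)))"

end

theory Submission
  imports Defs
begin

theorem theorem7p2:
  fixes V :: "'a set" and E :: "'a \<Rightarrow> 'a \<Rightarrow> bool"
  assumes "graph V E"
    and "countable V" and "infinite V"
    and "ME_homogeneous V E"
  shows "MH_homogeneous V (compl_graph V E)"
  unfolding MH_homogeneous_def
proof (intro allI impI)
  fix A B f
  assume H: "A \<subseteq> V \<and> B \<subseteq> V \<and> finite A \<and> finite B \<and> mono_between (compl_graph V E) A B f"
  hence AV: "A \<subseteq> V" and BV: "B \<subseteq> V" and fA: "finite A"
    and fB: "\<forall>x\<in>A. f x \<in> B" and inj: "inj_on f A"
    and pres: "\<forall>x\<in>A. \<forall>y\<in>A. compl_graph V E x y \<longrightarrow> compl_graph V E (f x) (f y)"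
    by (auto simp: mono_between_def)
  define k where "k = inv_into A f"
  have mk: "mono_between E (f ` A) A k"
    unfolding mono_between_def
  proof (intro conjI ballI impI)
    fix y assume "y \<in> f ` A" thus "k y \<in> A" by (simp add: k_def inv_into_into)
  next
    show "inj_on k (f ` A)" by (simp add: k_def inj_on_inv_into)
  next
    fix x y assume x: "x \<in> f ` A" and y: "y \<in> f ` A" and e: "E x y"
    then obtain a b where a: "a \<in> A" "x = f a" and b: "b \<in> A" "y = f b" by auto
    have ka: "k x = a" using a inj by (simp add: k_def)
    have kb: "k y = b" using b inj by (simp add: k_def)
    show "E (k x) (k y)"
    proof (rule ccontr)
      assume ne: "\<not> E (k x) (k y)"
      show False
      proof (cases "a = b")
        case True
        with a b e assms(1) show False by (auto simp: graph_def)
      next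
        case False
        hence "compl_graph V E a b" using ne ka kb a b AV by (auto simp: compl_graph_def)
        hence "compl_graph V E (f a) (f b)" using pres a b by blast
        thus False using e a b by (simp add: compl_graph_def)
      qed
    qed
  qed
  have "f ` A \<subseteq> V" using fB BV by auto
  then obtain g where g: "endo V E g" "g ` V = V" "\<forall>x\<in>f ` A. g x = k x"
    using assms(4) mk AV fA unfolding ME_homogeneous_def by (meson finite_imageI)
  have gf: "g (f a) = a" if "a \<in> A" for a
    using g(3) that inj by (simp add: k_def)
  define s where "s y = (if y \<in> A then f y else (SOME z. z \<in> V \<and> g z = y))" for y
  have s: "s y \<in> V \<and> g (s y) = y" if "y \<in> V" for y
  proof (cases "y \<in> A")
    case True thus ?thesis using gf fB BV by (auto simp: s_def)
  next
    case False
    have "\<exists>z. z \<in> V \<and> g z = y" using g(2) that by (metis imageE)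
    hence "(SOME z. z \<in> V \<and> g z = y) \<in> V \<and> g (SOME z. z \<in> V \<and> g z = y) = y"
      by (rule someI_ex)
    thus ?thesis using False by (simp add: s_def)
  qed
  have "endo V (compl_graph V E) s"
    unfolding endo_def
  proof (intro conjI ballI impI)
    fix x assume "x \<in> V" thus "s x \<in> V" using s by blast
  next
    fix x y assume x: "x \<in> V" and y: "y \<in> V" and c: "compl_graph V E x y"
    have "\<not> E (s x) (s y)"
    proof
      assume "E (s x) (s y)"
      hence "E (g (s x)) (g (s y))" using g(1) s[OF x] s[OF y] unfolding endo_def by blast
      thus False using s[OF x] s[OF y] c by (simp add: compl_graph_def)
    qed
    moreover have "s x \<noteq> s y" using s[OF x] s[OF y] c by (auto simp: compl_graph_def)
    ultimately show "compl_graph V E (s x) (s y)" using s[OF x] s[OF y] by (simp add: compl_graph_def)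
  qed
  moreover have "\<forall>x\<in>A. s x = f x" by (simp add: s_def)
  ultimately show "\<exists>h. endo V (compl_graph V E) h \<and> (\<forall>x\<in>A. h x = f x)" by blast
qed

end
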